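(* Let $n$ be a positive integer and $1\le k\le c\le \frac n2$. For every $(k,k)$-legal diagram $\nu$ (a partition with exactly $k$ parts), the Schur polynomial $S_\nu$ is a linear combination, with integer coefficients, of Schur polynomials $S_{\lambda/\mu}$ of $(k,c)$-legal diagrams $\lambda/\mu$.
   Context: Here $h_d$ ($d\ge0$) denotes the complete homogeneous symmetric polynomial of degree $d$ in $n$ variables (so $h_0=1$ and $h_1,\ldots,h_n$ are algebraically independent), and $h_d=0$ for $d<0$. For $1\le c\le n$, $A_c$ is the $(n-c+1)\times c$ matrix whose entry in row $i$, column $j$ is $h_{n-c+1-i+j}$. For a partition $\lambda$ with exactly $k$ parts and a partition $\mu$ with $\mu_i\le\lambda_i$ and $\mu_k=0$, $S_{\lambda/\mu}=\det(h_{\lambda_i-\mu_j-i+j})_{1\le i,j\le k}$ (with $S_\nu=S_{\nu/0}$), and the diagram $\lambda/\mu$ is $(k,c)$-legal if $S_{\lambda/\mu}$ equals some $k\times k$ minor of $A_c$. *)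

theory Defs
  imports "Jordan_Normal_Form.Determinant"
begin

text \<open>Polynomials in the n variables x_0,...,x_{n-1} with integer coefficients are
represented by their polynomial functions on int^n (points are functions nat => int,
only the first n coordinates matter).  Since int is an infinite integral domain,
two integer polynomials are equal iff their polynomial functions agree.\<close>

definition hsym :: "nat \<Rightarrow> int \<Rightarrow> (nat \<Rightarrow> int) \<Rightarrow> int" where
  "hsym n d x = (if d < 0 then 0 else
     (\<Sum>a\<in>{a :: nat \<Rightarrow> nat. (\<forall>i. n \<le> i \<longrightarrow> a i = 0) \<and> (\<Sum>i<n. a i) = nat d}.
        \<Prod>i<n. x i ^ a i))"

definition is_partition_k :: "nat \<Rightarrow> nat list \<Rightarrow> bool" where
  "is_partition_k k lam \<longleftrightarrow> length lam = k \<and> sorted_wrt (\<ge>) lam \<and> (\<forall>p\<in>set lam. 0 < p)"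

definition inner_ok :: "nat \<Rightarrow> nat list \<Rightarrow> nat list \<Rightarrow> bool" where
  "inner_ok k lam mu \<longleftrightarrow> length mu = k \<and> sorted_wrt (\<ge>) mu \<and>
     (\<forall>i<k. mu ! i \<le> lam ! i) \<and> mu ! (k - 1) = 0"

text \<open>Skew Schur polynomial S_{lam/mu} = det(h_{lam_i - mu_j - i + j}), 1 <= i,j <= k
(0-indexed here; the shift does not change j - i).\<close>
definition skew_schur :: "nat \<Rightarrow> nat \<Rightarrow> nat list \<Rightarrow> nat list \<Rightarrow> (nat \<Rightarrow> int) \<Rightarrow> int" where
  "skew_schur n k lam mu x = det (mat k k (\<lambda>(i, j).
      hsym n (int (lam ! i) - int (mu ! j) - int i + int j) x))"

text \<open>The k x k minor of A_c (size (n-c+1) x c, entry (i,j) = h_{n-c+1-i+j}, 1-indexed)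
on rows rs and columns cs (strictly increasing lists of 1-based indices).\<close>
definition minor_A :: "nat \<Rightarrow> nat \<Rightarrow> nat \<Rightarrow> nat list \<Rightarrow> nat list \<Rightarrow> (nat \<Rightarrow> int) \<Rightarrow> int" where
  "minor_A n c k rs cs x = det (mat k k (\<lambda>(a, b).
      hsym n (int n - int c + 1 - int (rs ! a) + int (cs ! b)) x))"

definition legal :: "nat \<Rightarrow> nat \<Rightarrow> nat \<Rightarrow> nat list \<Rightarrow> nat list \<Rightarrow> bool" where
  "legal n k c lam mu \<longleftrightarrow> is_partition_k k lam \<and> inner_ok k lam mu \<and>
     (\<exists>rs cs. length rs = k \<and> sorted_wrt (<) rs \<and> set rs \<subseteq> {1..n - c + 1} \<and>
              length cs = k \<and> sorted_wrt (<) cs \<and> set cs \<subseteq> {1..c} \<and>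
              (\<forall>x. skew_schur n k lam mu x = minor_A n c k rs cs x))"

end

theory Submission
  imports Defs
begin


definition Dm :: "nat \<Rightarrow> (int \<Rightarrow> int) \<Rightarrow> (nat \<Rightarrow> int) \<Rightarrow> (nat \<Rightarrow> int) \<Rightarrow> int" where
  "Dm k f al be = det (mat k k (\<lambda>(i,j). f (al i + be j)))"

definition ind :: "nat set \<Rightarrow> nat \<Rightarrow> int" where
  "ind I i = (if i \<in> I then 1 else 0)"

definition rsets :: "nat \<Rightarrow> nat \<Rightarrow> nat set set" where
  "rsets k r = {I. I \<subseteq> {0..<k} \<and> card I = r}"

lemma Dm_leib: "Dm k f al be = (\<Sum>p\<in>{p. p permutes {0..<k}}. signof p * (\<Prod>i=0..<k. f (al i + be (p i))))"
proof -
  have "Dm k f al be = (\<Sum>p\<in>{p. p permutes {0..<k}}. signof p * (\<Prod>i=0..<k. mat k k (\<lambda>(i,j). f (al i + be j)) $$ (i, p i)))"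
    unfolding Dm_def by (rule det_def') auto
  also have "\<dots> = (\<Sum>p\<in>{p. p permutes {0..<k}}. signof p * (\<Prod>i=0..<k. f (al i + be (p i))))"
  proof (rule sum.cong[OF refl])
    fix p assume "p \<in> {p. p permutes {0..<k}}"
    then have "\<And>i. i < k \<Longrightarrow> p i < k" using permutes_in_image by fastforce
    then show "signof p * (\<Prod>i=0..<k. mat k k (\<lambda>(i,j). f (al i + be j)) $$ (i, p i)) = signof p * (\<Prod>i=0..<k. f (al i + be (p i)))"
      by (auto intro!: arg_cong[where f="(*) _"] prod.cong)
  qed
  finally show ?thesis .
qed

lemma raise_identity:
  "(\<Sum>I\<in>rsets k r. Dm k f (\<lambda>i. al i + ind I i) be) = (\<Sum>J\<in>rsets k r. Dm k f al (\<lambda>j. be j + ind J j))"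
proof -
  have "(\<Sum>I\<in>rsets k r. Dm k f (\<lambda>i. al i + ind I i) be) =
     (\<Sum>p\<in>{p. p permutes {0..<k}}. \<Sum>I\<in>rsets k r. signof p * (\<Prod>i=0..<k. f (al i + ind I i + be (p i))))"
    unfolding Dm_leib by (rule sum.swap)
  also have "\<dots> = (\<Sum>p\<in>{p. p permutes {0..<k}}. \<Sum>J\<in>rsets k r. signof p * (\<Prod>i=0..<k. f (al i + be (p i) + ind J (p i))))"
  proof (rule sum.cong[OF refl])
    fix p assume "p \<in> {p. p permutes {0..<k}}"
    then have pp: "p permutes {0..<k}" by simp
    have inj: "inj p" using pp permutes_inj by blast
    have bij: "bij_betw ((`) p) (rsets k r) (rsets k r)"
    proof (rule bij_betw_byWitness[where f'="(`) (Hilbert_Choice.inv p)"])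
      show "\<forall>a\<in>rsets k r. Hilbert_Choice.inv p ` p ` a = a" using inj by (simp add: image_comp)
      have "inj (Hilbert_Choice.inv p)" using pp permutes_inv permutes_inj by blast
      show "\<forall>a'\<in>rsets k r. p ` Hilbert_Choice.inv p ` a' = a'" using pp by (simp add: image_comp permutes_inverses(1))
      show "(`) p ` rsets k r \<subseteq> rsets k r" unfolding rsets_def using pp inj
        by (auto simp: card_image inj_on_subset permutes_image dest: permutes_in_image[THEN iffD2])
      show "(`) (Hilbert_Choice.inv p) ` rsets k r \<subseteq> rsets k r" unfolding rsets_def using permutes_inv[OF pp] \<open>inj (Hilbert_Choice.inv p)\<close>
        by (auto simp: card_image inj_on_subset dest: permutes_in_image[THEN iffD2])
    qed
    have "(\<Sum>J\<in>rsets k r. signof p * (\<Prod>i=0..<k. f (al i + be (p i) + ind J (p i))))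
        = (\<Sum>I\<in>rsets k r. signof p * (\<Prod>i=0..<k. f (al i + be (p i) + ind (p ` I) (p i))))"
      by (rule sum.reindex_bij_betw[OF bij, symmetric])
    also have "\<dots> = (\<Sum>I\<in>rsets k r. signof p * (\<Prod>i=0..<k. f (al i + ind I i + be (p i))))"
      using inj by (auto simp: ind_def inj_image_mem_iff intro!: sum.cong prod.cong arg_cong[where f="(*) _"] arg_cong[where f=f])
    finally show "(\<Sum>I\<in>rsets k r. signof p * (\<Prod>i=0..<k. f (al i + ind I i + be (p i)))) = (\<Sum>J\<in>rsets k r. signof p * (\<Prod>i=0..<k. f (al i + be (p i) + ind J (p i))))" by simp
  qed
  also have "\<dots> = (\<Sum>J\<in>rsets k r. Dm k f al (\<lambda>j. be j + ind J j))"
    unfolding Dm_leib by (subst sum.swap) (simp add: add.assoc)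
  finally show ?thesis .
qed



definition dec :: "nat \<Rightarrow> (nat \<Rightarrow> int) \<Rightarrow> bool" where
  "dec k al \<longleftrightarrow> (\<forall>m. Suc m < k \<longrightarrow> al (Suc m) < al m)"
definition inc :: "nat \<Rightarrow> (nat \<Rightarrow> int) \<Rightarrow> bool" where
  "inc k be \<longleftrightarrow> (\<forall>m. Suc m < k \<longrightarrow> be m < be (Suc m))"
definition win :: "nat \<Rightarrow> nat \<Rightarrow> (nat \<Rightarrow> int) \<Rightarrow> (nat \<Rightarrow> int) \<Rightarrow> bool" where
  "win n k al be \<longleftrightarrow> 1 \<le> al (k-1) + be 0 \<and> al 0 + be (k-1) \<le> int n"
definition good :: "nat \<Rightarrow> nat \<Rightarrow> nat \<Rightarrow> (nat \<Rightarrow> int) \<Rightarrow> (nat \<Rightarrow> int) \<Rightarrow> bool" where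
  "good n c k al be \<longleftrightarrow> dec k al \<and> inc k be \<and> win n k al be \<and>
     al 0 - al (k-1) \<le> int n - int c \<and> be (k-1) - be 0 \<le> int c - 1"
definition inspan :: "nat \<Rightarrow> nat \<Rightarrow> nat \<Rightarrow> ((int \<Rightarrow> int) \<Rightarrow> int) \<Rightarrow> bool" where
  "inspan n c k g \<longleftrightarrow> (\<exists>L. (\<forall>(a,al,be)\<in>set L. good n c k al be) \<and>
      g = (\<lambda>f. \<Sum>(a,al,be)\<leftarrow>L. a * Dm k f al be))"

lemma inspan_good: "good n c k al be \<Longrightarrow> inspan n c k (\<lambda>f. Dm k f al be)"
  unfolding inspan_def by (rule exI[of _ "[(1,al,be)]"]) auto

lemma inspan_zero: "inspan n c k (\<lambda>f. 0)"
  unfolding inspan_def by (rule exI[of _ "[]"]) auto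

lemma inspan_add: assumes "inspan n c k g" "inspan n c k h" shows "inspan n c k (\<lambda>f. g f + h f)"
proof -
  obtain L1 where 1: "\<forall>(a,al,be)\<in>set L1. good n c k al be" "g = (\<lambda>f. \<Sum>(a,al,be)\<leftarrow>L1. a * Dm k f al be)"
    using assms(1) unfolding inspan_def by blast
  obtain L2 where 2: "\<forall>(a,al,be)\<in>set L2. good n c k al be" "h = (\<lambda>f. \<Sum>(a,al,be)\<leftarrow>L2. a * Dm k f al be)"
    using assms(2) unfolding inspan_def by blast
  show ?thesis unfolding inspan_def
    by (rule exI[of _ "L1 @ L2"]) (use 1 2 in auto)
qed

lemma inspan_neg: assumes "inspan n c k g" shows "inspan n c k (\<lambda>f. - g f)"
proof -
  obtain L1 where 1: "\<forall>(a,al,be)\<in>set L1. good n c k al be" "g = (\<lambda>f. \<Sum>(a,al,be)\<leftarrow>L1. a * Dm k f al be)"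
    using assms(1) unfolding inspan_def by blast
  have e: "- (\<Sum>(a,al,be)\<leftarrow>L1. a * Dm k f al be) = (\<Sum>(a,al,be)\<leftarrow>map (\<lambda>(a,al,be). (-a,al,be)) L1. a * Dm k f al be)" for f
    by (induction L1) auto
  show ?thesis unfolding inspan_def
    by (rule exI[of _ "map (\<lambda>(a,al,be). (-a,al,be)) L1"]) (use 1 e in auto)
qed

lemma inspan_diff: "inspan n c k g \<Longrightarrow> inspan n c k h \<Longrightarrow> inspan n c k (\<lambda>f. g f - h f)"
  using inspan_add[of n c k g "\<lambda>f. - h f"] inspan_neg[of n c k h] by simp

lemma inspan_sum: assumes "finite S" "\<And>x. x \<in> S \<Longrightarrow> inspan n c k (g x)"
  shows "inspan n c k (\<lambda>f. \<Sum>x\<in>S. g x f)"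
  using assms
proof (induction S rule: finite_induct)
  case empty then show ?case using inspan_zero by simp
next
  case (insert x F)
  then show ?case using inspan_add[of n c k "g x" "\<lambda>f. \<Sum>x\<in>F. g x f"] by simp
qed

lemma Dm_rows0: assumes "Suc m < k" "al m = al (Suc m)" shows "Dm k f al be = 0"
  unfolding Dm_def
proof (rule det_identical_rows[of _ k m "Suc m"])
  show "row (mat k k (\<lambda>(i, j). f (al i + be j))) m = row (mat k k (\<lambda>(i, j). f (al i + be j))) (Suc m)"
    using assms by (auto intro!: eq_vecI)
qed (use assms in auto)

lemma Dm_cols0: assumes "Suc m < k" "be m = be (Suc m)" shows "Dm k f al be = 0"
  unfolding Dm_def
proof (rule det_identical_columns[of _ k m "Suc m"])
  show "col (mat k k (\<lambda>(i, j). f (al i + be j))) m = col (mat k k (\<lambda>(i, j). f (al i + be j))) (Suc m)"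
    using assms by (auto intro!: eq_vecI)
qed (use assms in auto)

lemma dec_gap: assumes "dec k al" "i \<le> j" "j < k" shows "al j + int (j - i) \<le> al i"
  using assms(2,3)
proof (induction j)
  case 0 then show ?case by simp
next
  case (Suc j)
  show ?case
  proof (cases "i = Suc j")
    case True then show ?thesis by simp
  next
    case False
    then have "i \<le> j" using Suc by simp
    then have "al j + int (j - i) \<le> al i" using Suc by simp
    moreover have "al (Suc j) < al j" using assms(1) Suc unfolding dec_def by simp
    ultimately show ?thesis using \<open>i \<le> j\<close> by (simp add: Suc_diff_le)
  qed
qed

lemma inc_gap: assumes "inc k be" "i \<le> j" "j < k" shows "be i + int (j - i) \<le> be j"
  using assms(2,3)
proof (induction j)
  case 0 then show ?case by simp
next
  case (Suc j)
  show ?case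
  proof (cases "i = Suc j")
    case True then show ?thesis by simp
  next
    case False
    then have "i \<le> j" using Suc by simp
    then have "be i + int (j - i) \<le> be j" using Suc by simp
    moreover have "be j < be (Suc j)" using assms(1) Suc unfolding inc_def by simp
    ultimately show ?thesis using \<open>i \<le> j\<close> by (simp add: Suc_diff_le)
  qed
qed

lemma ind_01: "ind I m = 0 \<or> ind I m = 1" unfolding ind_def by auto

lemma raise_rows_cases: assumes "dec k A"
  shows "(\<exists>m. Suc m < k \<and> A m + ind I m = A (Suc m) + ind I (Suc m)) \<or> dec k (\<lambda>m. A m + ind I m)"
proof (rule disjCI)
  assume h: "\<not> dec k (\<lambda>m. A m + ind I m)"
  then obtain m where m: "Suc m < k" "\<not> A (Suc m) + ind I (Suc m) < A m + ind I m" unfolding dec_def by auto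
  have "A (Suc m) < A m" using assms m unfolding dec_def by auto
  then show "\<exists>m. Suc m < k \<and> A m + ind I m = A (Suc m) + ind I (Suc m)"
    using m ind_01[of I m] ind_01[of I "Suc m"] by (intro exI[of _ m]) auto
qed

lemma raise_cols_cases: assumes "inc k B"
  shows "(\<exists>m. Suc m < k \<and> B m + ind J m = B (Suc m) + ind J (Suc m)) \<or> inc k (\<lambda>m. B m + ind J m)"
proof (rule disjCI)
  assume h: "\<not> inc k (\<lambda>m. B m + ind J m)"
  then obtain m where m: "Suc m < k" "\<not> B m + ind J m < B (Suc m) + ind J (Suc m)" unfolding inc_def by auto
  have "B m < B (Suc m)" using assms m unfolding inc_def by auto
  then show "\<exists>m. Suc m < k \<and> B m + ind J m = B (Suc m) + ind J (Suc m)"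
    using m ind_01[of J m] ind_01[of J "Suc m"] by (intro exI[of _ m]) auto
qed



definition gcount :: "nat \<Rightarrow> (nat \<Rightarrow> int) \<Rightarrow> nat" where
  "gcount k al = card {m. Suc m < k \<and> (\<forall>q\<le>m. al q = al (Suc q) + 1)}"
definition meas :: "nat \<Rightarrow> (nat \<Rightarrow> int) \<Rightarrow> nat" where
  "meas k al = nat (al 0 - al (k-1)) * (k+1) + gcount k al"

lemma gcount_le: "gcount k al \<le> k"
proof -
  have "{m. Suc m < k \<and> (\<forall>q\<le>m. al q = al (Suc q) + 1)} \<subseteq> {0..<k}" by auto
  then show ?thesis unfolding gcount_def using card_mono[of "{0..<k}"] by fastforce
qed

lemma gcount_gap: assumes "p < k" "al p \<noteq> al (Suc p) + 1" shows "gcount k al \<le> p"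
proof -
  have "{m. Suc m < k \<and> (\<forall>q\<le>m. al q = al (Suc q) + 1)} \<subseteq> {0..<p}"
    using assms by (auto simp: not_less) (meson not_less)
  then show ?thesis unfolding gcount_def using card_mono[of "{0..<p}"] by fastforce
qed

lemma gcount_exact: assumes "Suc i < k" "al i \<noteq> al (Suc i) + 1" "\<And>q. q < i \<Longrightarrow> al q = al (Suc q) + 1"
  shows "gcount k al = i"
proof -
  have "{m. Suc m < k \<and> (\<forall>q\<le>m. al q = al (Suc q) + 1)} = {0..<i}"
    using assms by (auto simp: not_less) (meson le_trans not_le)
  then show ?thesis unfolding gcount_def by simp
qed

lemma meas_less:
  assumes "k \<ge> 1" "a 0 - a (k-1) \<le> b 0 - b (k-1)" "0 \<le> a 0 - a (k-1)"
    "a 0 - a (k-1) < b 0 - b (k-1) \<or> gcount k a < gcount k b"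
  shows "meas k a < meas k b"
proof (cases "a 0 - a (k-1) < b 0 - b (k-1)")
  case True
  then have "nat (a 0 - a (k-1)) + 1 \<le> nat (b 0 - b (k-1))" using assms by linarith
  then have "(nat (a 0 - a (k-1)) + 1) * (k+1) \<le> nat (b 0 - b (k-1)) * (k+1)" by (rule mult_right_mono) simp
  then show ?thesis unfolding meas_def using gcount_le[of k a] by (simp add: algebra_simps)
next
  case False
  then have "a 0 - a (k-1) = b 0 - b (k-1)" using assms by linarith
  then show ?thesis unfolding meas_def using assms False by simp
qed



lemma rsets_fin: "finite (rsets k r)"
proof -
  have "rsets k r \<subseteq> Pow {0..<k}" unfolding rsets_def by auto
  then show ?thesis by (rule finite_subset) simp
qed

lemma main:
  assumes k1: "1 \<le> k" and nck: "int k \<le> int n - int c"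
  shows "dec k al \<Longrightarrow> inc k be \<Longrightarrow> win n k al be \<Longrightarrow>
    (al 0 - al (k-1) \<le> int n - int c \<longrightarrow> be (k-1) - be 0 \<le> int c - 1) \<Longrightarrow>
    inspan n c k (\<lambda>f. Dm k f al be)"
proof (induction "meas k al" arbitrary: al be rule: less_induct)
  case less
  show ?case
  proof (cases "al 0 - al (k-1) \<le> int n - int c")
    case True then show ?thesis using less.prems by (intro inspan_good) (auto simp: good_def)
  next
    case False
    have wn: "1 \<le> al (k-1) + be 0" "al 0 + be (k-1) \<le> int n" using less.prems(3) unfolding win_def by auto
    have ex: "\<exists>i. Suc i < k \<and> al i \<noteq> al (Suc i) + 1"
    proof (rule ccontr)
      assume "\<not> ?thesis"
      then have h: "\<And>i. Suc i < k \<Longrightarrow> al i = al (Suc i) + 1" by auto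
      have "j < k \<Longrightarrow> al 0 = al j + int j" for j by (induction j) (use h in force)+
      moreover have "k - 1 < k" using k1 by simp
      ultimately have "al 0 = al (k-1) + int (k-1)" by blast
      then have "al 0 - al (k-1) = int (k-1)" by simp
      then show False using False nck k1 by linarith
    qed
    define i where "i = (LEAST i. Suc i < k \<and> al i \<noteq> al (Suc i) + 1)"
    have i: "Suc i < k" "al i \<noteq> al (Suc i) + 1" using LeastI_ex[OF ex] unfolding i_def by auto
    have before: "al q = al (Suc q) + 1" if "q < i" for q
    proof -
      have "\<not> (Suc q < k \<and> al q \<noteq> al (Suc q) + 1)" using not_less_Least[of q] that unfolding i_def by blast
      then show ?thesis using that i by auto
    qed
    have gi: "gcount k al = i" by (rule gcount_exact) (use i before in auto)
    have deci: "al (Suc i) + 2 \<le> al i" using i less.prems(1) unfolding dec_def by force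
    define I0 where "I0 = {0..<Suc i}"
    define A0 where "A0 = (\<lambda>m. al m - ind I0 m)"
    have I0r: "I0 \<in> rsets k (Suc i)" unfolding rsets_def I0_def using i by auto
    have A0I0: "(\<lambda>m. A0 m + ind I0 m) = al" by (auto simp: A0_def)
    have A0dec: "dec k A0" unfolding dec_def
    proof (intro allI impI)
      fix m assume m: "Suc m < k"
      have "al (Suc m) < al m" using less.prems(1) m unfolding dec_def by auto
      then show "A0 (Suc m) < A0 m" using deci
        unfolding A0_def ind_def I0_def by (cases "m < i"; cases "m = i") auto
    qed
    have A00: "A0 0 = al 0 - 1" unfolding A0_def ind_def I0_def by simp
    have A0k: "A0 (k-1) = al (k-1)" unfolding A0_def ind_def I0_def using i by auto
    have A0nn: "0 \<le> A0 0 - A0 (k-1)" using dec_gap[OF A0dec, of 0 "k-1"] k1 by simp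
    have key: "Dm k f al be = (\<Sum>J\<in>rsets k (Suc i). Dm k f A0 (\<lambda>j. be j + ind J j))
       - (\<Sum>I\<in>rsets k (Suc i) - {I0}. Dm k f (\<lambda>m. A0 m + ind I m) be)" for f
    proof -
      have "(\<Sum>I\<in>rsets k (Suc i). Dm k f (\<lambda>m. A0 m + ind I m) be) =
         Dm k f al be + (\<Sum>I\<in>rsets k (Suc i) - {I0}. Dm k f (\<lambda>m. A0 m + ind I m) be)"
        using sum.remove[OF rsets_fin I0r, of "\<lambda>I. Dm k f (\<lambda>m. A0 m + ind I m) be"] A0I0 by simp
      with raise_identity[where k=k and r="Suc i" and f=f and al=A0 and be=be] show ?thesis by simp
    qed
    have bsp: "be (k-1) - be 0 \<le> int c - 2" using wn False by linarith
    have T1: "inspan n c k (\<lambda>f. \<Sum>J\<in>rsets k (Suc i). Dm k f A0 (\<lambda>j. be j + ind J j))"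
    proof (rule inspan_sum[OF rsets_fin])
      fix J assume J: "J \<in> rsets k (Suc i)"
      from raise_cols_cases[OF less.prems(2), of J]
      show "inspan n c k (\<lambda>f. Dm k f A0 (\<lambda>j. be j + ind J j))"
      proof
        assume "\<exists>m. Suc m < k \<and> be m + ind J m = be (Suc m) + ind J (Suc m)"
        then obtain m where "Suc m < k" "be m + ind J m = be (Suc m) + ind J (Suc m)" by blast
        then have "\<And>f. Dm k f A0 (\<lambda>j. be j + ind J j) = 0" by (intro Dm_cols0) auto
        then show ?thesis using inspan_zero by simp
      next
        assume incB: "inc k (\<lambda>j. be j + ind J j)"
        have Bb: "be 0 \<le> be 0 + ind J 0" "be (k-1) + ind J (k-1) \<le> be (k-1) + 1"
          using ind_01[of J 0] ind_01[of J "k-1"] by auto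
        show ?thesis
        proof (rule less.hyps[OF _ A0dec incB])
          show "meas k A0 < meas k al" by (rule meas_less) (use k1 A00 A0k A0nn in auto)
          show "win n k A0 (\<lambda>j. be j + ind J j)" unfolding win_def using wn A00 A0k Bb by auto
          show "A0 0 - A0 (k-1) \<le> int n - int c \<longrightarrow> be (k-1) + ind J (k-1) - (be 0 + ind J 0) \<le> int c - 1"
            using bsp Bb by auto
        qed
      qed
    qed
    have T2: "inspan n c k (\<lambda>f. \<Sum>I\<in>rsets k (Suc i) - {I0}. Dm k f (\<lambda>m. A0 m + ind I m) be)"
    proof (rule inspan_sum)
      show "finite (rsets k (Suc i) - {I0})" using rsets_fin by simp
      fix I assume I: "I \<in> rsets k (Suc i) - {I0}"
      from raise_rows_cases[OF A0dec, of I]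
      show "inspan n c k (\<lambda>f. Dm k f (\<lambda>m. A0 m + ind I m) be)"
      proof
        assume "\<exists>m. Suc m < k \<and> A0 m + ind I m = A0 (Suc m) + ind I (Suc m)"
        then obtain m where "Suc m < k" "A0 m + ind I m = A0 (Suc m) + ind I (Suc m)" by blast
        then have "\<And>f. Dm k f (\<lambda>m. A0 m + ind I m) be = 0" by (intro Dm_rows0) auto
        then show ?thesis using inspan_zero by simp
      next
        assume decA: "dec k (\<lambda>m. A0 m + ind I m)"
        have Ak: "al (k-1) \<le> A0 (k-1) + ind I (k-1)" using A0k ind_01[of I "k-1"] by auto
        have A0': "A0 0 + ind I 0 \<le> al 0" using A00 ind_01[of I 0] by auto
        have Ann: "0 \<le> (A0 0 + ind I 0) - (A0 (k-1) + ind I (k-1))"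
          using dec_gap[OF decA, of 0 "k-1"] k1 by simp
        show ?thesis
        proof (rule less.hyps[OF _ decA less.prems(2)])
          show "win n k (\<lambda>m. A0 m + ind I m) be" unfolding win_def using wn Ak A0' by auto
          show "A0 0 + ind I 0 - (A0 (k-1) + ind I (k-1)) \<le> int n - int c \<longrightarrow> be (k-1) - be 0 \<le> int c - 1"
            using bsp by simp
          show "meas k (\<lambda>m. A0 m + ind I m) < meas k al"
          proof (cases "0 \<in> I")
            case False
            then have "A0 0 + ind I 0 = al 0 - 1" using A00 unfolding ind_def by simp
            then show ?thesis by (intro meas_less) (use k1 Ak Ann in auto)
          next
            case True
            have cI: "card I = Suc i" "I \<subseteq> {0..<k}" using I unfolding rsets_def by auto
            have "\<not> I0 \<subseteq> I"
            proof
              assume "I0 \<subseteq> I"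
              moreover have "finite I" using cI(2) finite_subset by blast
              moreover have "card I0 = card I" using cI I0_def by simp
              ultimately have "I0 = I" using card_subset_eq by blast
              then show False using I by simp
            qed
            then have exp: "\<exists>p. p < Suc i \<and> p \<notin> I" unfolding I0_def by auto
            define p where "p = (LEAST p. p < Suc i \<and> p \<notin> I)"
            have p: "p < Suc i" "p \<notin> I" using LeastI_ex[OF exp] unfolding p_def by auto
            have pb: "q \<in> I" if "q < p" for q
              using not_less_Least[of q "\<lambda>p. p < Suc i \<and> p \<notin> I"] that p unfolding p_def by auto
            have "p \<noteq> 0" using p True by (metis)
            then obtain q where q: "p = Suc q" by (cases p) auto
            have qi: "q < i" using p q by simp
            have "A0 q + ind I q = al q" "A0 (Suc q) + ind I (Suc q) = al (Suc q) - 1"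
              using pb[of q] p q qi unfolding A0_def ind_def I0_def by auto
            then have "A0 q + ind I q \<noteq> A0 (Suc q) + ind I (Suc q) + 1" using before[OF qi] by simp
            then have "gcount k (\<lambda>m. A0 m + ind I m) \<le> q" by (intro gcount_gap) (use qi i in auto)
            then show ?thesis by (intro meas_less) (use k1 Ak A0' Ann gi qi in auto)
          qed
        qed
      qed
    qed
    have "(\<lambda>f. Dm k f al be) = (\<lambda>f. (\<Sum>J\<in>rsets k (Suc i). Dm k f A0 (\<lambda>j. be j + ind J j))
       - (\<Sum>I\<in>rsets k (Suc i) - {I0}. Dm k f (\<lambda>m. A0 m + ind I m) be))" using key by auto
    then show ?thesis using inspan_diff[OF T1 T2] by simp
  qed
qed



definition lamf :: "nat \<Rightarrow> (nat \<Rightarrow> int) \<Rightarrow> (nat \<Rightarrow> int) \<Rightarrow> nat list" where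
  "lamf k al be = map (\<lambda>i. nat (al i + int i + be (k-1) - int (k-1))) [0..<k]"
definition muf :: "nat \<Rightarrow> (nat \<Rightarrow> int) \<Rightarrow> nat list" where
  "muf k be = map (\<lambda>j. nat (int j - be j + be (k-1) - int (k-1))) [0..<k]"

lemma good_legal:
  assumes g: "good n c k al be" and k1: "1 \<le> k" and cn: "c \<le> n"
  shows "legal n k c (lamf k al be) (muf k be) \<and>
    (\<forall>x. skew_schur n k (lamf k al be) (muf k be) x = Dm k (\<lambda>d. hsym n d x) al be)"
proof -
  have dA: "dec k al" and iB: "inc k be" and wn: "1 \<le> al (k-1) + be 0" "al 0 + be (k-1) \<le> int n"
    and sA: "al 0 - al (k-1) \<le> int n - int c" and sB: "be (k-1) - be 0 \<le> int c - 1"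
    using g unfolding good_def win_def by auto
  have ag: "al j + int j \<le> al i + int i" if "i \<le> j" "j < k" for i j
    using dec_gap[OF dA that] that by (simp add: of_nat_diff)
  have bg: "be i + int j \<le> be j + int i" if "i \<le> j" "j < k" for i j
    using inc_gap[OF iB that] that by (simp add: of_nat_diff)
  have kk: "int (k-1) = int k - 1" "k - 1 < k" using k1 by auto
  have agk: "al (k-1) + int (k-1) \<le> al i + int i" if "i < k" for i using ag[of i "k-1"] that by simp
  have ag0: "al i + int i \<le> al 0" if "i < k" for i using ag[of 0 i] that by simp
  have bg0: "be 0 + int j \<le> be j" if "j < k" for j using bg[of 0 j] that by simp
  have bgk: "be j + int (k-1) \<le> be (k-1) + int j" if "j < k" for j using bg[of j "k-1"] that by simp
  have b0k: "be 0 + int (k-1) \<le> be (k-1)" using bg0[of "k-1"] kk by simp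
  have lpos: "1 \<le> al i + int i + be (k-1) - int (k-1)" if "i < k" for i
    using agk[OF that] b0k wn kk by linarith
  have mpos: "0 \<le> int j - be j + be (k-1) - int (k-1)" if "j < k" for j
    using bgk[OF that] by linarith
  have lnth: "int (lamf k al be ! i) = al i + int i + be (k-1) - int (k-1)" if "i < k" for i
    using lpos[OF that] that unfolding lamf_def by simp
  have mnth: "int (muf k be ! j) = int j - be j + be (k-1) - int (k-1)" if "j < k" for j
    using mpos[OF that] that unfolding muf_def by simp
  have sk: "skew_schur n k (lamf k al be) (muf k be) x = Dm k (\<lambda>d. hsym n d x) al be" for x
    unfolding skew_schur_def Dm_def
    by (rule arg_cong[where f=det], rule eq_matI) (auto simp: lnth mnth)
  define s where "s = max 1 (al 0 + be 0 - (int n - int c))"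
  define rs where "rs = map (\<lambda>i. nat (int n - int c + 1 - al i - be 0 + s)) [0..<k]"
  define cs where "cs = map (\<lambda>j. nat (be j - be 0 + s)) [0..<k]"
  have rb: "1 \<le> int n - int c + 1 - al i - be 0 + s \<and> int n - int c + 1 - al i - be 0 + s \<le> int n - int c + 1"
    if "i < k" for i
    using ag0[OF that] agk[OF that] that kk wn sA unfolding s_def by auto
  have cb: "1 \<le> be j - be 0 + s \<and> be j - be 0 + s \<le> int c" if "j < k" for j
    using bg0[OF that] bgk[OF that] that kk wn sB unfolding s_def by auto
  have rnth: "int (rs ! i) = int n - int c + 1 - al i - be 0 + s" if "i < k" for i
    using rb[OF that] that unfolding rs_def by simp
  have cnth: "int (cs ! j) = be j - be 0 + s" if "j < k" for j
    using cb[OF that] that unfolding cs_def by simp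
  have "length rs = k" "length cs = k" unfolding rs_def cs_def by auto
  have rsort: "sorted_wrt (<) rs" unfolding sorted_wrt_iff_nth_less
  proof (intro allI impI)
    fix i j assume "i < j" "j < length rs"
    then show "rs ! i < rs ! j" using rnth[of i] rnth[of j] ag[of i j] \<open>length rs = k\<close> by force
  qed
  have csort: "sorted_wrt (<) cs" unfolding sorted_wrt_iff_nth_less
  proof (intro allI impI)
    fix i j assume "i < j" "j < length cs"
    then show "cs ! i < cs ! j" using cnth[of i] cnth[of j] bg[of i j] \<open>length cs = k\<close> by force
  qed
  have rset: "set rs \<subseteq> {1..n - c + 1}"
  proof
    fix v assume "v \<in> set rs"
    then obtain i where "i < k" "v = rs ! i" using \<open>length rs = k\<close> by (auto simp: in_set_conv_nth)
    then show "v \<in> {1..n - c + 1}" using rnth[of i] rb[of i] cn by auto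
  qed
  have cset: "set cs \<subseteq> {1..c}"
  proof
    fix v assume "v \<in> set cs"
    then obtain i where "i < k" "v = cs ! i" using \<open>length cs = k\<close> by (auto simp: in_set_conv_nth)
    then show "v \<in> {1..c}" using cnth[of i] cb[of i] by auto
  qed
  have mi: "minor_A n c k rs cs x = Dm k (\<lambda>d. hsym n d x) al be" for x
    unfolding minor_A_def Dm_def
    by (rule arg_cong[where f=det], rule eq_matI) (auto simp: rnth cnth)
  have part: "is_partition_k k (lamf k al be)"
    unfolding is_partition_k_def
  proof (intro conjI)
    show "length (lamf k al be) = k" unfolding lamf_def by simp
    show "sorted_wrt (\<ge>) (lamf k al be)" unfolding sorted_wrt_iff_nth_less
    proof (intro allI impI)
      fix i j assume "i < j" "j < length (lamf k al be)"
      then show "lamf k al be ! j \<le> lamf k al be ! i"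
        using ag[of i j] unfolding lamf_def by (auto intro!: nat_mono)
    qed
    show "\<forall>p\<in>set (lamf k al be). 0 < p"
    proof
      fix p assume "p \<in> set (lamf k al be)"
      then obtain i where "i < k" "p = nat (al i + int i + be (k-1) - int (k-1))" unfolding lamf_def by auto
      then show "0 < p" using lpos[of i] by linarith
    qed
  qed
  have inner: "inner_ok k (lamf k al be) (muf k be)"
    unfolding inner_ok_def
  proof (intro conjI)
    show "length (muf k be) = k" unfolding muf_def by simp
    show "sorted_wrt (\<ge>) (muf k be)" unfolding sorted_wrt_iff_nth_less
    proof (intro allI impI)
      fix i j assume "i < j" "j < length (muf k be)"
      then show "muf k be ! j \<le> muf k be ! i"
        using bg[of i j] unfolding muf_def by (auto intro!: nat_mono)
    qed
    show "\<forall>i<k. muf k be ! i \<le> lamf k al be ! i"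
    proof (intro allI impI)
      fix i assume "i < k"
      then show "muf k be ! i \<le> lamf k al be ! i"
        using mnth[of i] lnth[of i] agk[of i] bg0[of i] b0k kk wn by force
    qed
    show "muf k be ! (k - 1) = 0" using k1 unfolding muf_def by simp
  qed
  have "legal n k c (lamf k al be) (muf k be)"
    unfolding legal_def using part inner rsort csort rset cset sk mi \<open>length rs = k\<close> \<open>length cs = k\<close>
    by (intro conjI exI[of _ rs] exI[of _ cs]) auto
  then show ?thesis using sk by blast
qed

lemma sum_conv:
  assumes "\<forall>(a,al,be)\<in>set L. good n c k al be" "1 \<le> k" "c \<le> n"
  shows "(\<Sum>(a,al,be)\<leftarrow>L. a * Dm k (\<lambda>d. hsym n d x) al be) =
     (\<Sum>(a,lam,mu)\<leftarrow>map (\<lambda>(a,al,be). (a, lamf k al be, muf k be)) L. a * skew_schur n k lam mu x)"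
  using assms(1)
proof (induction L)
  case Nil then show ?case by simp
next
  case (Cons t L)
  obtain a al be where t: "t = (a,al,be)" by (cases t) auto
  have "good n c k al be" using Cons.prems t by auto
  then have "skew_schur n k (lamf k al be) (muf k be) x = Dm k (\<lambda>d. hsym n d x) al be"
    using good_legal assms(2,3) by blast
  then show ?case using Cons t by auto
qed



theorem lemma3:
  fixes n k c :: nat and nu :: "nat list"
  assumes "0 < n" and "1 \<le> k" and "k \<le> c" and "2 * c \<le> n"
    and "legal n k k nu (replicate k 0)"
  shows "\<exists>L :: (int \<times> nat list \<times> nat list) list.
           (\<forall>(a, lam, mu)\<in>set L. legal n k c lam mu) \<and>
           (\<forall>x. skew_schur n k nu (replicate k 0) x =
                (\<Sum>(a, lam, mu)\<leftarrow>L. a * skew_schur n k lam mu x))"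
proof -
  have k1: "1 \<le> k" and cn: "c \<le> n" and nck: "int k \<le> int n - int c" using assms by auto
  obtain rs cs where rs: "length rs = k" "sorted_wrt (<) rs" "set rs \<subseteq> {1..n - k + 1}"
    and cs: "length cs = k" "sorted_wrt (<) cs" "set cs \<subseteq> {1..k}"
    and eq: "\<forall>x. skew_schur n k nu (replicate k 0) x = minor_A n k k rs cs x"
    using assms(5) unfolding legal_def by blast
  define al where "al = (\<lambda>a. int n - int k + 1 - int (rs ! a))"
  define be where "be = (\<lambda>b. int (cs ! b))"
  have rsb: "1 \<le> rs ! a \<and> rs ! a \<le> n - k + 1" if "a < k" for a
  proof -
    have "rs ! a \<in> set rs" using rs(1) that by simp
    then show ?thesis using rs(3) by auto
  qed
  have csb: "1 \<le> cs ! a \<and> cs ! a \<le> k" if "a < k" for a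
  proof -
    have "cs ! a \<in> set cs" using cs(1) that by simp
    then show ?thesis using cs(3) by auto
  qed
  have kk: "k - 1 < k" "0 < k" using k1 by auto
  have dA: "dec k al" unfolding dec_def al_def
    using rs(1,2) by (auto simp: sorted_wrt_iff_nth_less)
  have iB: "inc k be" unfolding inc_def be_def
    using cs(1,2) by (auto simp: sorted_wrt_iff_nth_less)
  have wn: "win n k al be" unfolding win_def al_def be_def
    using rsb[OF kk(1)] csb[OF kk(2)] rsb[OF kk(2)] csb[OF kk(1)] assms(3,4) by auto
  have sp: "be (k-1) - be 0 \<le> int c - 1" unfolding be_def
    using csb[OF kk(2)] csb[OF kk(1)] assms(3) by auto
  have mi: "minor_A n k k rs cs x = Dm k (\<lambda>d. hsym n d x) al be" for x
    unfolding minor_A_def Dm_def al_def be_def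
    by (rule arg_cong[where f=det], rule eq_matI) auto
  have "inspan n c k (\<lambda>f. Dm k f al be)"
    using main[OF k1 nck dA iB wn] sp by blast
  then obtain L where L: "\<forall>(a,al,be)\<in>set L. good n c k al be"
    and Leq: "(\<lambda>f. Dm k f al be) = (\<lambda>f. \<Sum>(a,al,be)\<leftarrow>L. a * Dm k f al be)"
    unfolding inspan_def by blast
  show ?thesis
  proof (intro exI[of _ "map (\<lambda>(a,al,be). (a, lamf k al be, muf k be)) L"] conjI allI)
    show "\<forall>(a, lam, mu)\<in>set (map (\<lambda>(a,al,be). (a, lamf k al be, muf k be)) L). legal n k c lam mu"
      using L good_legal[OF _ k1 cn] by auto
    fix x
    have "skew_schur n k nu (replicate k 0) x = Dm k (\<lambda>d. hsym n d x) al be" using eq mi by simp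
    also have "\<dots> = (\<Sum>(a,al,be)\<leftarrow>L. a * Dm k (\<lambda>d. hsym n d x) al be)"
      using fun_cong[OF Leq, of "\<lambda>d. hsym n d x"] by simp
    also have "\<dots> = (\<Sum>(a,lam,mu)\<leftarrow>map (\<lambda>(a,al,be). (a, lamf k al be, muf k be)) L. a * skew_schur n k lam mu x)"
      by (rule sum_conv[OF L k1 cn])
    finally show "skew_schur n k nu (replicate k 0) x = (\<Sum>(a,lam,mu)\<leftarrow>map (\<lambda>(a,al,be). (a, lamf k al be, muf k be)) L. a * skew_schur n k lam mu x)" .
  qed
qed

end
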